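(* Let $G$ be a bipartite distance-regular graph of diameter $d$ which is an antipodal double cover, and let $B$ be its tridiagonal intersection matrix. If $\ker B\neq 0$, then $d$ is even. Moreover, in this case $\ker B$ has a basis consisting of a single vector $\boldsymbol{u}=(u_0,u_1,\dots,u_d)^T$ with $u_0=1$, $u_1=0$ and $u_d=(-1)^{d/2}$.
   Context: A connected graph $G$ of diameter $d$ is distance-regular if there are non-negative integers $b_i,c_i$ ($0\le i\le d$) such that for any two vertices $x,y$ at distance $i$, $y$ has exactly $c_i$ neighbours at distance $i-1$ from $x$ and exactly $b_i$ neighbours at distance $i+1$ from $x$. $G$ is $r$-regular with $r=b_0$, $c_0=b_d=0$, $c_1=1$, and $a_i=r-b_i-c_i$. $B$ is the $(d+1)\times(d+1)$ tridiagonal matrix indexed by $0,\dots,d$ with $B_{i,i}=a_i$, $B_{i,i+1}=c_{i+1}$, $B_{i+1,i}=b_i$, all other entries $0$. $G$ is an antipodal double cover if for every vertex $x$ there is exactly one vertex at distance $d$ from $x$. *)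

theory Defs
  imports Main "Jordan_Normal_Form.Matrix_Kernel"
begin

definition simple_graph :: "'a set \<Rightarrow> ('a \<Rightarrow> 'a \<Rightarrow> bool) \<Rightarrow> bool" where
  "simple_graph V E \<longleftrightarrow> finite V \<and> V \<noteq> {} \<and>
     (\<forall>x\<in>V. \<forall>y\<in>V. E x y \<longrightarrow> E y x) \<and> (\<forall>x\<in>V. \<not> E x x)"

definition adj_rel :: "'a set \<Rightarrow> ('a \<Rightarrow> 'a \<Rightarrow> bool) \<Rightarrow> ('a \<times> 'a) set" where
  "adj_rel V E = {(x, y). x \<in> V \<and> y \<in> V \<and> E x y}"

definition graph_connected :: "'a set \<Rightarrow> ('a \<Rightarrow> 'a \<Rightarrow> bool) \<Rightarrow> bool" where
  "graph_connected V E \<longleftrightarrow> (\<forall>x\<in>V. \<forall>y\<in>V. (x, y) \<in> (adj_rel V E)\<^sup>*)"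

definition gdist :: "'a set \<Rightarrow> ('a \<Rightarrow> 'a \<Rightarrow> bool) \<Rightarrow> 'a \<Rightarrow> 'a \<Rightarrow> nat" where
  "gdist V E x y = (LEAST n. (x, y) \<in> (adj_rel V E) ^^ n)"

definition diameter :: "'a set \<Rightarrow> ('a \<Rightarrow> 'a \<Rightarrow> bool) \<Rightarrow> nat" where
  "diameter V E = Max {gdist V E x y | x y. x \<in> V \<and> y \<in> V}"

definition distance_regular ::
  "'a set \<Rightarrow> ('a \<Rightarrow> 'a \<Rightarrow> bool) \<Rightarrow> nat \<Rightarrow> (nat \<Rightarrow> nat) \<Rightarrow> (nat \<Rightarrow> nat) \<Rightarrow> bool" where
  "distance_regular V E d b c \<longleftrightarrow>
     simple_graph V E \<and> graph_connected V E \<and> diameter V E = d \<and>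
     c 0 = 0 \<and> b d = 0 \<and>
     (\<forall>i\<le>d. \<forall>x\<in>V. \<forall>y\<in>V. gdist V E x y = i \<longrightarrow>
        card {z \<in> V. E y z \<and> gdist V E x z + 1 = i} = c i \<and>
        card {z \<in> V. E y z \<and> gdist V E x z = i + 1} = b i)"

definition bipartite :: "'a set \<Rightarrow> ('a \<Rightarrow> 'a \<Rightarrow> bool) \<Rightarrow> bool" where
  "bipartite V E \<longleftrightarrow> (\<exists>f :: 'a \<Rightarrow> bool. \<forall>x\<in>V. \<forall>y\<in>V. E x y \<longrightarrow> f x \<noteq> f y)"

definition antipodal_double_cover :: "'a set \<Rightarrow> ('a \<Rightarrow> 'a \<Rightarrow> bool) \<Rightarrow> nat \<Rightarrow> bool" where
  "antipodal_double_cover V E d \<longleftrightarrow> (\<forall>x\<in>V. \<exists>!y. y \<in> V \<and> gdist V E x y = d)"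

text \<open>Tridiagonal intersection matrix B, indexed 0..d, with a_i = r - b_i - c_i, r = b_0.\<close>
definition intersection_matrix :: "nat \<Rightarrow> (nat \<Rightarrow> nat) \<Rightarrow> (nat \<Rightarrow> nat) \<Rightarrow> real mat" where
  "intersection_matrix d b c = mat (d + 1) (d + 1) (\<lambda>(i, j).
     if i = j then real (b 0) - real (b i) - real (c i)
     else if j = i + 1 then real (c (i + 1))
     else if i = j + 1 then real (b j)
     else 0)"

end

theory Submission
  imports Defs
begin


lemma relpow_in_V:
  assumes "(x, y) \<in> (adj_rel V E) ^^ n" "x \<in> V"
  shows "y \<in> V"
  using assms(1)
proof (induction n arbitrary: y)
  case 0 thus ?case using assms(2) by (auto elim: relpow_0_E)
next
  case (Suc n)
  from Suc.prems obtain z where "(x, z) \<in> (adj_rel V E) ^^ n" "(z, y) \<in> adj_rel V E"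
    by (rule relpow_Suc_E)
  thus ?case unfolding adj_rel_def by blast
qed

lemma relpow_sym:
  assumes "simple_graph V E" "(x, y) \<in> (adj_rel V E) ^^ n"
  shows "(y, x) \<in> (adj_rel V E) ^^ n"
  using assms(2)
proof (induction n arbitrary: y)
  case 0 thus ?case by (auto elim: relpow_0_E)
next
  case (Suc n)
  from Suc.prems obtain z where z: "(x, z) \<in> (adj_rel V E) ^^ n" "(z, y) \<in> adj_rel V E"
    by (rule relpow_Suc_E)
  have "(y, z) \<in> adj_rel V E" using z(2) assms(1) by (auto simp: adj_rel_def simple_graph_def)
  thus ?case using Suc.IH[OF z(1)] by (rule relpow_Suc_I2)
qed

lemma gdist_walk:
  assumes "graph_connected V E" "x \<in> V" "y \<in> V"
  shows "(x, y) \<in> (adj_rel V E) ^^ gdist V E x y"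
proof -
  have "(x, y) \<in> (adj_rel V E)\<^sup>*" using assms by (auto simp: graph_connected_def)
  then obtain n where "(x, y) \<in> (adj_rel V E) ^^ n" using rtrancl_power by blast
  thus ?thesis unfolding gdist_def by (rule LeastI)
qed

lemma gdist_le:
  assumes "(x, y) \<in> (adj_rel V E) ^^ n"
  shows "gdist V E x y \<le> n"
  unfolding gdist_def using assms by (rule Least_le)

lemma gdist_sym:
  assumes "simple_graph V E" "graph_connected V E" "x \<in> V" "y \<in> V"
  shows "gdist V E x y = gdist V E y x"
  using gdist_le[OF relpow_sym[OF assms(1) gdist_walk[OF assms(2,3,4)]]]
    gdist_le[OF relpow_sym[OF assms(1) gdist_walk[OF assms(2,4,3)]]] by simp

lemma gdist_0:
  assumes "graph_connected V E" "x \<in> V" "y \<in> V"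
  shows "gdist V E x y = 0 \<longleftrightarrow> x = y"
proof
  assume "gdist V E x y = 0"
  thus "x = y" using gdist_walk[OF assms] by simp
next
  assume "x = y"
  have "(x, x) \<in> (adj_rel V E) ^^ 0" by simp
  hence "gdist V E x x \<le> 0" by (rule gdist_le)
  thus "gdist V E x y = 0" using `x = y` by simp
qed

lemma gdist_tri:
  assumes "graph_connected V E" "x \<in> V" "y \<in> V" "z \<in> V"
  shows "gdist V E x z \<le> gdist V E x y + gdist V E y z"
proof -
  have "(x, z) \<in> (adj_rel V E) ^^ (gdist V E x y + gdist V E y z)"
    by (rule relpow_trans[OF gdist_walk[OF assms(1,2,3)] gdist_walk[OF assms(1,3,4)]])
  thus ?thesis by (rule gdist_le)
qed

lemma gdist_edge:
  assumes "graph_connected V E" "y \<in> V" "z \<in> V" "E y z"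
  shows "gdist V E y z \<le> 1"
proof -
  have "(y, z) \<in> (adj_rel V E) ^^ 1" unfolding relpow_1 adj_rel_def using assms by blast
  thus ?thesis by (rule gdist_le)
qed

lemma gdist_edge_step:
  assumes "graph_connected V E" "x \<in> V" "y \<in> V" "z \<in> V" "E y z"
  shows "gdist V E x z \<le> gdist V E x y + 1"
  using gdist_tri[OF assms(1,2,3,4)] gdist_edge[OF assms(1,3,4,5)] by simp

lemma gdist_pred:
  assumes "simple_graph V E" "graph_connected V E" "x \<in> V" "y \<in> V"
    "gdist V E x y = Suc j"
  shows "\<exists>z\<in>V. E y z \<and> gdist V E x z = j"
proof -
  have "(x, y) \<in> (adj_rel V E) ^^ j O adj_rel V E"
    using gdist_walk[OF assms(2,3,4)] assms(5) by simp
  then obtain z where z1: "(x, z) \<in> (adj_rel V E) ^^ j" and z2: "(z, y) \<in> adj_rel V E" by blast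
  have zV: "z \<in> V" "E z y" using z2 by (auto simp: adj_rel_def)
  have "E y z" using zV assms(1,4) by (auto simp: simple_graph_def)
  have le: "gdist V E x z \<le> j" using z1 by (rule gdist_le)
  have "gdist V E x y \<le> gdist V E x z + 1"
    using gdist_edge_step[OF assms(2,3) zV(1) assms(4) zV(2)] .
  with le assms(5) have "gdist V E x z = j" by simp
  with zV `E y z` show ?thesis by blast
qed

lemma bool_key: "(q::bool) \<noteq> r \<Longrightarrow> (p = r) = (\<not> (p = q))"
  by (cases p; cases q; cases r) simp_all

lemma bool_key2: "((p::bool) = q) = A \<Longrightarrow> (p = r) = A \<Longrightarrow> q = r"
  by (cases p; cases q; cases r; cases A) simp_all

lemma relpow_parity:
  fixes f :: "'a \<Rightarrow> bool"
  assumes "\<forall>x\<in>V. \<forall>y\<in>V. E x y \<longrightarrow> f x \<noteq> f y" "(x, y) \<in> (adj_rel V E) ^^ n"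
  shows "(f x = f y) \<longleftrightarrow> even n"
  using assms(2)
proof (induction n arbitrary: y)
  case 0 thus ?case by (auto elim: relpow_0_E)
next
  case (Suc n)
  from Suc.prems obtain z where z: "(x, z) \<in> (adj_rel V E) ^^ n" "(z, y) \<in> adj_rel V E"
    by (rule relpow_Suc_E)
  have "f z \<noteq> f y" using z(2) assms(1) unfolding adj_rel_def by blast
  have ih: "(f x = f z) = even n" by (rule Suc.IH[OF z(1)])
  have k: "(f x = f y) = (\<not> (f x = f z))" by (rule bool_key[OF `f z \<noteq> f y`])
  have e: "even (Suc n) = (\<not> even n)" by simp
  show ?case unfolding k ih e ..
qed

lemma gdist_parity:
  assumes "bipartite V E" "graph_connected V E" "x \<in> V" "y \<in> V" "z \<in> V" "E y z"
  shows "gdist V E x y \<noteq> gdist V E x z"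
proof
  assume eq: "gdist V E x y = gdist V E x z"
  obtain f :: "'a \<Rightarrow> bool" where f: "\<forall>x\<in>V. \<forall>y\<in>V. E x y \<longrightarrow> f x \<noteq> f y"
    using assms(1) unfolding bipartite_def by blast
  have h1: "(f x = f y) \<longleftrightarrow> even (gdist V E x y)" by (rule relpow_parity[OF f gdist_walk[OF assms(2,3,4)]])
  have h2: "(f x = f z) \<longleftrightarrow> even (gdist V E x z)" by (rule relpow_parity[OF f gdist_walk[OF assms(2,3,5)]])
  have "f y = f z" using bool_key2[OF h1[unfolded eq] h2] .
  moreover have "f y \<noteq> f z" using f assms(4,5,6) by blast
  ultimately show False by contradiction
qed



fun wseq :: "(nat \<Rightarrow> nat) \<Rightarrow> (nat \<Rightarrow> nat) \<Rightarrow> nat \<Rightarrow> real" where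
  "wseq b c 0 = 1"
| "wseq b c (Suc 0) = 0"
| "wseq b c (Suc (Suc k)) = - real (b k) * wseq b c k / real (c (k + 2))"

lemma wseq_odd: "odd j \<Longrightarrow> wseq b c j = 0"
  by (induction b c j rule: wseq.induct) auto

lemma wseq_even_closed:
  "wseq b c (2 * m) = (-1) ^ m * (\<Prod>k\<in>{0..<m}. real (b (2 * k))) / (\<Prod>k\<in>{0..<m}. real (c (2 * k + 2)))"
proof (induction m)
  case 0 thus ?case by simp
next
  case (Suc m)
  have "wseq b c (2 * Suc m) = wseq b c (Suc (Suc (2 * m)))" by simp
  also have "\<dots> = - real (b (2 * m)) * wseq b c (2 * m) / real (c (2 * m + 2))" by simp
  also have "\<dots> = (-1) ^ Suc m * (\<Prod>k\<in>{0..<Suc m}. real (b (2 * k))) / (\<Prod>k\<in>{0..<Suc m}. real (c (2 * k + 2)))"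
    unfolding Suc.IH by (simp add: prod.atLeast0_lessThan_Suc)
  finally show ?case .
qed

context
  fixes d :: nat and b c :: "nat \<Rightarrow> nat"
  assumes a0: "\<And>i. i \<le> d \<Longrightarrow> b 0 = b i + c i"
    and cpos: "\<And>i. 1 \<le> i \<Longrightarrow> i \<le> d \<Longrightarrow> c i > 0"
    and bpos: "\<And>i. i < d \<Longrightarrow> b i > 0"
    and bc: "\<And>i. i \<le> d \<Longrightarrow> b i = c (d - i)"
    and d1: "d \<ge> 1"
begin

lemma wseq_even_nz:
  assumes "even j" "j \<le> d" shows "wseq b c j \<noteq> 0"
proof -
  obtain m where m: "j = 2 * m" using assms(1) by blast
  have p1: "(\<Prod>k\<in>{0..<m}. real (b (2 * k))) \<noteq> 0"
  proof -
    have "\<forall>k\<in>{0..<m}. real (b (2 * k)) \<noteq> 0"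
    proof
      fix k assume "k \<in> {0..<m}"
      hence "2 * k < d" using m assms(2) by simp
      thus "real (b (2 * k)) \<noteq> 0" using bpos by simp
    qed
    thus ?thesis by (simp add: prod_zero_iff)
  qed
  have p2: "(\<Prod>k\<in>{0..<m}. real (c (2 * k + 2))) \<noteq> 0"
  proof -
    have "\<forall>k\<in>{0..<m}. real (c (2 * k + 2)) \<noteq> 0"
    proof
      fix k assume "k \<in> {0..<m}"
      hence "2 * k + 2 \<le> d" using m assms(2) by simp
      thus "real (c (2 * k + 2)) \<noteq> 0" using cpos[of "2 * k + 2"] by simp
    qed
    thus ?thesis by (simp add: prod_zero_iff)
  qed
  show ?thesis unfolding m wseq_even_closed using p1 p2 by simp
qed

lemma wseq_d:
  assumes "even d" shows "wseq b c d = (-1) ^ (d div 2)"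
proof -
  define M where "M = d div 2"
  have dM: "d = 2 * M" using assms unfolding M_def by simp
  have "(\<Prod>k\<in>{0..<M}. real (b (2 * k))) = (\<Prod>k\<in>{0..<M}. real (c (d - 2 * k)))"
    by (rule prod.cong) (simp_all add: bc dM)
  also have "\<dots> = (\<Prod>k\<in>{0..<M}. real (c (d - 2 * (M + 0 - Suc k))))"
    by (rule prod.atLeastLessThan_rev)
  also have "\<dots> = (\<Prod>k\<in>{0..<M}. real (c (2 * k + 2)))"
  proof (rule prod.cong[OF refl])
    fix k assume "k \<in> {0..<M}"
    hence "d - 2 * (M + 0 - Suc k) = 2 * k + 2" using dM by auto
    thus "real (c (d - 2 * (M + 0 - Suc k))) = real (c (2 * k + 2))" by simp
  qed
  finally have eq: "(\<Prod>k\<in>{0..<M}. real (b (2 * k))) = (\<Prod>k\<in>{0..<M}. real (c (2 * k + 2)))" .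
  have p2: "(\<Prod>k\<in>{0..<M}. real (c (2 * k + 2))) \<noteq> 0"
  proof -
    have "\<forall>k\<in>{0..<M}. real (c (2 * k + 2)) \<noteq> 0"
    proof
      fix k assume "k \<in> {0..<M}"
      hence "2 * k + 2 \<le> d" using dM by simp
      thus "real (c (2 * k + 2)) \<noteq> 0" using cpos[of "2 * k + 2"] by simp
    qed
    thus ?thesis by (simp add: prod_zero_iff)
  qed
  show ?thesis unfolding dM wseq_even_closed eq using p2 by (simp add: M_def[symmetric] dM)
qed

abbreviation "BB \<equiv> intersection_matrix d b c"

lemma BB_carrier: "BB \<in> carrier_mat (d + 1) (d + 1)"
  by (simp add: intersection_matrix_def)

lemma BB_entry:
  assumes "i < d + 1" "j < d + 1"
  shows "BB $$ (i, j) = (if j = i + 1 then real (c (i + 1)) else if i = j + 1 then real (b j) else 0)"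
proof -
  have "real (b 0) - real (b i) - real (c i) = 0" using a0[of i] assms(1) by simp
  thus ?thesis using assms unfolding intersection_matrix_def by (cases "i = j") auto
qed

lemma BB_row:
  assumes v: "v \<in> carrier_vec (d + 1)" and k: "k \<le> d"
  shows "(BB *\<^sub>v v) $ k = (if k < d then real (c (k + 1)) * v $ (k + 1) else 0)
     + (if 0 < k then real (b (k - 1)) * v $ (k - 1) else 0)"
proof -
  have dv: "dim_vec v = d + 1" using v by simp
  have "(BB *\<^sub>v v) $ k = row BB k \<bullet> v" using k BB_carrier by simp
  also have "\<dots> = (\<Sum>j\<in>{0..<d + 1}. row BB k $ j * v $ j)" unfolding scalar_prod_def dv ..
  also have "\<dots> = (\<Sum>j\<in>{0..<d + 1}. (if j = k + 1 then real (c (k + 1)) * v $ j else 0)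
      + (if k = j + 1 then real (b j) * v $ j else 0))"
  proof (rule sum.cong[OF refl])
    fix j assume "j \<in> {0..<d + 1}"
    hence "j < d + 1" by simp
    thus "row BB k $ j * v $ j = (if j = k + 1 then real (c (k + 1)) * v $ j else 0)
      + (if k = j + 1 then real (b j) * v $ j else 0)"
      using k BB_carrier BB_entry[of k j] by auto
  qed
  also have "\<dots> = (\<Sum>j\<in>{0..<d + 1}. (if j = k + 1 then real (c (k + 1)) * v $ j else 0))
      + (\<Sum>j\<in>{0..<d + 1}. (if k = j + 1 then real (b j) * v $ j else 0))"
    by (rule sum.distrib)
  also have "(\<Sum>j\<in>{0..<d + 1}. (if j = k + 1 then real (c (k + 1)) * v $ j else 0))
      = (if k < d then real (c (k + 1)) * v $ (k + 1) else 0)"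
    by (simp add: sum.delta)
  also have "(\<Sum>j\<in>{0..<d + 1}. (if k = j + 1 then real (b j) * v $ j else 0))
      = (if 0 < k then real (b (k - 1)) * v $ (k - 1) else 0)"
  proof (cases k)
    case 0 thus ?thesis by simp
  next
    case (Suc m)
    have "(\<Sum>j\<in>{0..<d + 1}. (if k = j + 1 then real (b j) * v $ j else 0))
      = (\<Sum>j\<in>{0..<d + 1}. (if j = m then real (b j) * v $ j else 0))"
      by (rule sum.cong) (auto simp: Suc)
    also have "\<dots> = real (b m) * v $ m" using k Suc by (simp add: sum.delta)
    finally show ?thesis using Suc by simp
  qed
  finally show ?thesis .
qed

lemma BB_ker_iff:
  assumes v: "v \<in> carrier_vec (d + 1)"
  shows "v \<in> mat_kernel BB \<longleftrightarrow> (\<forall>k\<le>d. (BB *\<^sub>v v) $ k = 0)"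
proof -
  have "v \<in> mat_kernel BB \<longleftrightarrow> BB *\<^sub>v v = 0\<^sub>v (d + 1)"
    using v BB_carrier unfolding mat_kernel_def by auto
  also have "\<dots> \<longleftrightarrow> (\<forall>k\<le>d. (BB *\<^sub>v v) $ k = 0)"
  proof
    assume "BB *\<^sub>v v = 0\<^sub>v (d + 1)"
    thus "\<forall>k\<le>d. (BB *\<^sub>v v) $ k = 0" by simp
  next
    assume H: "\<forall>k\<le>d. (BB *\<^sub>v v) $ k = 0"
    show "BB *\<^sub>v v = 0\<^sub>v (d + 1)"
    proof (rule eq_vecI)
      fix i assume "i < dim_vec (0\<^sub>v (d + 1) :: real vec)"
      thus "(BB *\<^sub>v v) $ i = 0\<^sub>v (d + 1) $ i" using H by simp
    next
      show "dim_vec (BB *\<^sub>v v) = dim_vec (0\<^sub>v (d + 1) :: real vec)" using BB_carrier by simp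
    qed
  qed
  finally show ?thesis .
qed

lemma ker_wseq:
  assumes v: "v \<in> mat_kernel BB"
  shows "j \<le> d \<Longrightarrow> v $ j = v $ 0 * wseq b c j"
proof (induction j rule: less_induct)
  case (less j)
  have vc: "v \<in> carrier_vec (d + 1)" using v BB_carrier unfolding mat_kernel_def by simp
  have R: "\<And>k. k \<le> d \<Longrightarrow> (BB *\<^sub>v v) $ k = 0" using v BB_ker_iff[OF vc] by blast
  show ?case
  proof (cases j)
    case 0 thus ?thesis by simp
  next
    case (Suc j')
    show ?thesis
    proof (cases j')
      case 0
      have "real (c 1) * v $ 1 = 0" using R[of 0] BB_row[OF vc, of 0] d1 by simp
      moreover have "c 1 > 0" using cpos[of 1] d1 by simp
      ultimately show ?thesis using Suc 0 by simp
    next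
      case (Suc m)
      have jm: "j = m + 2" using Suc `j = Suc j'` by simp
      have "(BB *\<^sub>v v) $ (m + 1) = 0" using R[of "m + 1"] less.prems jm by simp
      hence "real (c (m + 2)) * v $ (m + 2) + real (b m) * v $ m = 0"
        using BB_row[OF vc, of "m + 1"] less.prems jm by simp
      moreover have "c (m + 2) > 0" using cpos[of "m + 2"] less.prems jm by simp
      moreover have "v $ m = v $ 0 * wseq b c m" using less.IH[of m] less.prems jm by simp
      ultimately have "v $ (m + 2) = - real (b m) * (v $ 0 * wseq b c m) / real (c (m + 2))"
        by (simp add: field_simps)
      thus ?thesis using jm by (simp add: numeral_2_eq_2)
    qed
  qed
qed

lemma main_alg:
  assumes nz: "mat_kernel BB \<noteq> {0\<^sub>v (d + 1)}"
  shows "even d \<and>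
    (\<exists>u \<in> carrier_vec (d + 1).
       mat_kernel BB = {a \<cdot>\<^sub>v u | a. True} \<and>
       u $ 0 = 1 \<and> u $ 1 = 0 \<and> u $ d = (-1) ^ (d div 2))"
proof -
  have z: "0\<^sub>v (d + 1) \<in> mat_kernel BB"
    unfolding BB_ker_iff[OF zero_carrier_vec] using BB_row[OF zero_carrier_vec] by simp
  obtain v where v: "v \<in> mat_kernel BB" "v \<noteq> 0\<^sub>v (d + 1)" using nz z by blast
  have vc: "v \<in> carrier_vec (d + 1)" using mat_kernelD(1)[OF BB_carrier v(1)] .
  have v0: "v $ 0 \<noteq> 0"
  proof
    assume h: "v $ 0 = 0"
    have "v = 0\<^sub>v (d + 1)"
    proof (rule eq_vecI)
      fix i assume "i < dim_vec (0\<^sub>v (d + 1) :: real vec)"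
      hence "i \<le> d" by simp
      thus "v $ i = 0\<^sub>v (d + 1) $ i" using ker_wseq[OF v(1), of i] h by simp
    next
      show "dim_vec v = dim_vec (0\<^sub>v (d + 1) :: real vec)" using vc by simp
    qed
    thus False using v(2) by contradiction
  qed
  have ev: "even d"
  proof (rule ccontr)
    assume od: "odd d"
    have "(BB *\<^sub>v v) $ d = 0" using BB_ker_iff[OF vc] v(1) by blast
    hence "real (b (d - 1)) * v $ (d - 1) = 0" using BB_row[OF vc, of d] d1 by simp
    moreover have "b (d - 1) > 0" using bpos[of "d - 1"] d1 by simp
    ultimately have "v $ (d - 1) = 0" by simp
    hence "v $ 0 * wseq b c (d - 1) = 0" using ker_wseq[OF v(1), of "d - 1"] by simp
    moreover have "wseq b c (d - 1) \<noteq> 0" using wseq_even_nz[of "d - 1"] od d1 by simp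
    ultimately show False using v0 by simp
  qed
  define u where "u = vec (d + 1) (wseq b c)"
  have uc: "u \<in> carrier_vec (d + 1)" unfolding u_def by simp
  have uk: "u \<in> mat_kernel BB"
    unfolding BB_ker_iff[OF uc]
  proof (intro allI impI)
    fix k assume k: "k \<le> d"
    show "(BB *\<^sub>v u) $ k = 0"
    proof (cases "k = 0")
      case True
      thus ?thesis using BB_row[OF uc k] d1 unfolding u_def by simp
    next
      case False
      then obtain m where m: "k = Suc m" by (cases k) auto
      show ?thesis
      proof (cases "k = d")
        case True
        have "odd m" using ev m True by simp
        hence "wseq b c m = 0" by (rule wseq_odd)
        moreover have "d - 1 = m" using m True by simp
        ultimately show ?thesis using BB_row[OF uc k] True unfolding u_def by simp
      next
        case False
        hence kd: "k < d" using k by simp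
        have cp: "c (m + 2) > 0" using cpos[of "m + 2"] kd m by simp
        have "real (c (k + 1)) * u $ (k + 1) + real (b (k - 1)) * u $ (k - 1)
          = real (c (m + 2)) * wseq b c (Suc (Suc m)) + real (b m) * wseq b c m"
          using kd m unfolding u_def by (simp add: numeral_2_eq_2)
        also have "\<dots> = 0" using cp by simp
        finally show ?thesis using BB_row[OF uc k] kd m by simp
      qed
    qed
  qed
  have keq: "mat_kernel BB = {a \<cdot>\<^sub>v u | a. True}"
  proof (rule equalityI; rule subsetI)
    fix v' assume v': "v' \<in> mat_kernel BB"
    have vc': "v' \<in> carrier_vec (d + 1)" using mat_kernelD(1)[OF BB_carrier v'] .
    have "v' = v' $ 0 \<cdot>\<^sub>v u"
    proof (rule eq_vecI)
      fix i assume "i < dim_vec (v' $ 0 \<cdot>\<^sub>v u)"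
      hence "i \<le> d" using uc by simp
      thus "v' $ i = (v' $ 0 \<cdot>\<^sub>v u) $ i" using ker_wseq[OF v', of i] unfolding u_def by simp
    next
      show "dim_vec v' = dim_vec (v' $ 0 \<cdot>\<^sub>v u)" using vc' uc by simp
    qed
    thus "v' \<in> {a \<cdot>\<^sub>v u | a. True}" by blast
  next
    fix v' assume "v' \<in> {a \<cdot>\<^sub>v u | a. True}"
    then obtain a where "v' = a \<cdot>\<^sub>v u" by blast
    thus "v' \<in> mat_kernel BB" using mat_kernel_smult[OF BB_carrier uk] by simp
  qed
  have "u $ 0 = 1" unfolding u_def by simp
  moreover have "u $ 1 = 0" unfolding u_def using d1 by simp
  moreover have "u $ d = (-1) ^ (d div 2)" unfolding u_def using wseq_d[OF ev] by simp
  ultimately show ?thesis using ev uc keq by blast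
qed

end


lemma dr_H:
  assumes "distance_regular V E d b c"
  shows "\<forall>i\<le>d. \<forall>x\<in>V. \<forall>y\<in>V. gdist V E x y = i \<longrightarrow>
        card {z \<in> V. E y z \<and> gdist V E x z + 1 = i} = c i \<and>
        card {z \<in> V. E y z \<and> gdist V E x z = i + 1} = b i"
  using assms unfolding distance_regular_def by (elim conjE)

lemma dr_basic:
  assumes "distance_regular V E d b c"
  shows "simple_graph V E" "graph_connected V E" "finite V" "c 0 = 0" "b d = 0"
proof -
  show sg: "simple_graph V E" using assms unfolding distance_regular_def by (elim conjE)
  show "graph_connected V E" using assms unfolding distance_regular_def by (elim conjE)
  show "c 0 = 0" using assms unfolding distance_regular_def by (elim conjE)
  show "b d = 0" using assms unfolding distance_regular_def by (elim conjE)
  show "finite V" using sg unfolding simple_graph_def by (elim conjE)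
qed

lemma dr_c:
  assumes "distance_regular V E d b c" "i \<le> d" "x \<in> V" "y \<in> V" "gdist V E x y = i"
  shows "card {z \<in> V. E y z \<and> gdist V E x z + 1 = i} = c i"
  using dr_H[OF assms(1), rule_format, OF assms(2-5)] by (rule conjunct1)

lemma dr_b:
  assumes "distance_regular V E d b c" "i \<le> d" "x \<in> V" "y \<in> V" "gdist V E x y = i"
  shows "card {z \<in> V. E y z \<and> gdist V E x z = i + 1} = b i"
  using dr_H[OF assms(1), rule_format, OF assms(2-5)] by (rule conjunct2)

lemma dr_diam:
  assumes "distance_regular V E d b c"
  shows "\<exists>x\<in>V. \<exists>y\<in>V. gdist V E x y = d" "\<And>x y. x \<in> V \<Longrightarrow> y \<in> V \<Longrightarrow> gdist V E x y \<le> d"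
proof -
  define S where "S = {gdist V E x y | x y. x \<in> V \<and> y \<in> V}"
  have S': "S = (\<lambda>(x, y). gdist V E x y) ` (V \<times> V)" unfolding S_def by auto
  have fin: "finite S"
    unfolding S' using dr_basic(3)[OF assms] by simp
  have "V \<noteq> {}" using dr_basic(1)[OF assms] unfolding simple_graph_def by blast
  then obtain v where v: "v \<in> V" by blast
  have ne: "S \<noteq> {}" unfolding S_def using v by blast
  have dd: "Max S = d" using assms unfolding distance_regular_def diameter_def S_def by (elim conjE)
  have "Max S \<in> S" by (rule Max_in[OF fin ne])
  hence "d \<in> S" unfolding dd .
  thus "\<exists>x\<in>V. \<exists>y\<in>V. gdist V E x y = d" unfolding S_def by blast
  show "\<And>x y. x \<in> V \<Longrightarrow> y \<in> V \<Longrightarrow> gdist V E x y \<le> d"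
  proof -
    fix x y assume "x \<in> V" "y \<in> V"
    hence "gdist V E x y \<in> S" unfolding S_def by blast
    from Max_ge[OF fin this] show "gdist V E x y \<le> d" unfolding dd .
  qed
qed

lemma dr_pair:
  assumes "distance_regular V E d b c" "i \<le> d"
  shows "\<exists>x\<in>V. \<exists>y\<in>V. gdist V E x y = i"
proof -
  have "\<forall>k. k \<le> d \<longrightarrow> (\<exists>x\<in>V. \<exists>y\<in>V. gdist V E x y = d - k)"
  proof
    fix k show "k \<le> d \<longrightarrow> (\<exists>x\<in>V. \<exists>y\<in>V. gdist V E x y = d - k)"
    proof (induction k)
      case 0 thus ?case using dr_diam(1)[OF assms(1)] by simp
    next
      case (Suc k)
      show ?case
      proof
        assume "Suc k \<le> d"
        then obtain x y where xy: "x \<in> V" "y \<in> V" "gdist V E x y = Suc (d - Suc k)"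
          using Suc.IH by (auto simp: Suc_diff_Suc)
        from gdist_pred[OF dr_basic(1,2)[OF assms(1)] xy] xy(1) show "\<exists>x\<in>V. \<exists>y\<in>V. gdist V E x y = d - Suc k" by blast
      qed
    qed
  qed
  from this[rule_format, of "d - i"] assms(2) show ?thesis by simp
qed

lemma dr_c_pos:
  assumes "distance_regular V E d b c" "1 \<le> i" "i \<le> d"
  shows "c i > 0"
proof -
  obtain x y where xy: "x \<in> V" "y \<in> V" "gdist V E x y = i" using dr_pair[OF assms(1,3)] by blast
  obtain j where j: "i = Suc j" using assms(2) by (cases i) auto
  obtain z where z: "z \<in> V" "E y z" "gdist V E x z = j"
    using gdist_pred[OF dr_basic(1,2)[OF assms(1)] xy(1,2)] xy(3) j by blast
  have "z \<in> {z \<in> V. E y z \<and> gdist V E x z + 1 = i}" using z j by simp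
  moreover have "finite {z \<in> V. E y z \<and> gdist V E x z + 1 = i}" using dr_basic(3)[OF assms(1)] by simp
  ultimately have "card {z \<in> V. E y z \<and> gdist V E x z + 1 = i} > 0" by (auto simp: card_gt_0_iff)
  thus ?thesis using dr_c[OF assms(1,3) xy] by simp
qed

lemma dr_b_pos:
  assumes "distance_regular V E d b c" "i < d"
  shows "b i > 0"
proof -
  obtain x y where xy: "x \<in> V" "y \<in> V" "gdist V E x y = Suc i" using dr_pair[OF assms(1), of "Suc i"] assms(2) by auto
  obtain z where z: "z \<in> V" "E y z" "gdist V E x z = i"
    using gdist_pred[OF dr_basic(1,2)[OF assms(1)] xy] by blast
  have "E z y" using z xy dr_basic(1)[OF assms(1)] by (auto simp: simple_graph_def)
  hence "y \<in> {w \<in> V. E z w \<and> gdist V E x w = i + 1}" using xy by simp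
  moreover have "finite {w \<in> V. E z w \<and> gdist V E x w = i + 1}" using dr_basic(3)[OF assms(1)] by simp
  ultimately have "card {w \<in> V. E z w \<and> gdist V E x w = i + 1} > 0" by (auto simp: card_gt_0_iff)
  thus ?thesis using dr_b[OF assms(1) _ xy(1) z(1,3)] assms(2) by simp
qed

lemma dr_bip_a:
  assumes "distance_regular V E d b c" "bipartite V E" "i \<le> d"
  shows "b 0 = b i + c i"
proof -
  note sg = dr_basic(1,2)[OF assms(1)]
  obtain x y where xy: "x \<in> V" "y \<in> V" "gdist V E x y = i" using dr_pair[OF assms(1,3)] by blast
  have fin: "finite V" using dr_basic(3)[OF assms(1)] .
  have N: "{z \<in> V. E y z \<and> gdist V E y z = 0 + 1} = {z \<in> V. E y z}"
  proof (intro Collect_cong iffI conjI)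
    fix z assume "z \<in> V \<and> E y z"
    hence z: "z \<in> V" "E y z" by auto
    have "gdist V E y z \<le> 1" using gdist_edge[OF sg(2) xy(2) z] .
    moreover have "y \<noteq> z" using z sg(1) xy(2) by (auto simp: simple_graph_def)
    hence "gdist V E y z \<noteq> 0" using gdist_0[OF sg(2) xy(2) z(1)] by simp
    ultimately show "gdist V E y z = 0 + 1" by simp
  qed auto
  have b0: "b 0 = card {z \<in> V. E y z}"
    using dr_b[OF assms(1) _ xy(2) xy(2), of 0] gdist_0[OF sg(2) xy(2) xy(2)] N by simp
  have U: "{z \<in> V. E y z} = {z \<in> V. E y z \<and> gdist V E x z + 1 = i} \<union> {z \<in> V. E y z \<and> gdist V E x z = i + 1}"
  proof (rule equalityI; rule subsetI)
    fix z assume "z \<in> {z \<in> V. E y z}"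
    hence z: "z \<in> V" "E y z" by auto
    have Ezy: "E z y" using z sg(1) xy(2) unfolding simple_graph_def by blast
    have "gdist V E x z \<le> gdist V E x y + 1" using gdist_edge_step[OF sg(2) xy(1,2) z] .
    moreover have "gdist V E x y \<le> gdist V E x z + 1" using gdist_edge_step[OF sg(2) xy(1) z(1) xy(2) Ezy] .
    moreover have "gdist V E x y \<noteq> gdist V E x z" using gdist_parity[OF assms(2) sg(2) xy(1,2) z] .
    ultimately have "gdist V E x z + 1 = i \<or> gdist V E x z = i + 1" using xy(3) by linarith
    thus "z \<in> {z \<in> V. E y z \<and> gdist V E x z + 1 = i} \<union> {z \<in> V. E y z \<and> gdist V E x z = i + 1}"
      using z by blast
  next
    fix z assume "z \<in> {z \<in> V. E y z \<and> gdist V E x z + 1 = i} \<union> {z \<in> V. E y z \<and> gdist V E x z = i + 1}"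
    thus "z \<in> {z \<in> V. E y z}" by blast
  qed
  have "card {z \<in> V. E y z} = card {z \<in> V. E y z \<and> gdist V E x z + 1 = i} + card {z \<in> V. E y z \<and> gdist V E x z = i + 1}"
    unfolding U by (rule card_Un_disjoint) (use fin in auto)
  thus ?thesis using b0 dr_c[OF assms(1,3) xy] dr_b[OF assms(1,3) xy] by simp
qed

lemma dr_antipode:
  assumes "distance_regular V E d b c" "antipodal_double_cover V E d"
    "x \<in> V" "x' \<in> V" "gdist V E x x' = d" "z \<in> V"
  shows "gdist V E x z + gdist V E z x' = d"
proof -
  note sg = dr_basic(1,2)[OF assms(1)]
  have "\<forall>z\<in>V. gdist V E x z = d - k \<longrightarrow> k \<le> d \<longrightarrow> gdist V E z x' \<le> k" for k
  proof (induction k)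
    case 0
    show ?case
    proof (intro ballI impI)
      fix z assume z: "z \<in> V" "gdist V E x z = d - 0"
      have u: "\<exists>!y. y \<in> V \<and> gdist V E x y = d" using assms(2,3) unfolding antipodal_double_cover_def by blast
      have "z = x'" using u z assms(4,5) by (metis diff_zero)
      thus "gdist V E z x' \<le> 0" using gdist_0[OF sg(2) z(1) assms(4)] by simp
    qed
  next
    case (Suc k)
    show ?case
    proof (intro ballI impI)
      fix z assume z: "z \<in> V" "gdist V E x z = d - Suc k" and k: "Suc k \<le> d"
      have "b (d - Suc k) > 0" using dr_b_pos[OF assms(1)] k by simp
      hence "card {w \<in> V. E z w \<and> gdist V E x w = d - Suc k + 1} > 0"
        using dr_b[OF assms(1) _ assms(3) z] by simp
      then obtain w where w: "w \<in> V" "E z w" "gdist V E x w = d - Suc k + 1"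
        unfolding card_gt_0_iff by blast
      have "gdist V E x w = d - k" using w(3) k by simp
      hence "gdist V E w x' \<le> k" using Suc.IH w(1) k by simp
      moreover have "E w z" using w z sg(1) by (auto simp: simple_graph_def)
      moreover have "gdist V E z x' \<le> gdist V E w x' + 1"
      proof -
        have "gdist V E x' z \<le> gdist V E x' w + 1" using gdist_edge_step[OF sg(2) assms(4) w(1) z(1) `E w z`] .
        thus ?thesis using gdist_sym[OF sg z(1) assms(4)] gdist_sym[OF sg w(1) assms(4)] by simp
      qed
      ultimately show "gdist V E z x' \<le> Suc k" by simp
    qed
  qed
  hence H: "gdist V E x z = d - (d - gdist V E x z) \<Longrightarrow> d - gdist V E x z \<le> d \<Longrightarrow> gdist V E z x' \<le> d - gdist V E x z"
    using assms(6) by blast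
  have le_d: "gdist V E x z \<le> d" using dr_diam(2)[OF assms(1) assms(3,6)] .
  hence "gdist V E z x' \<le> d - gdist V E x z" using H by simp
  moreover have "d \<le> gdist V E x z + gdist V E z x'"
    using gdist_tri[OF sg(2) assms(3,6,4)] assms(5) by simp
  ultimately show ?thesis using le_d by arith
qed

lemma dr_b_c:
  assumes "distance_regular V E d b c" "antipodal_double_cover V E d" "i \<le> d"
  shows "b i = c (d - i)"
proof -
  note sg = dr_basic(1,2)[OF assms(1)]
  obtain x y where xy: "x \<in> V" "y \<in> V" "gdist V E x y = i" using dr_pair[OF assms(1,3)] by blast
  obtain x' where x': "x' \<in> V" "gdist V E x x' = d" using assms(2) xy(1) unfolding antipodal_double_cover_def by blast
  have A: "\<And>z. z \<in> V \<Longrightarrow> gdist V E x z + gdist V E x' z = d"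
    using dr_antipode[OF assms(1,2) xy(1) x'] gdist_sym[OF sg _ x'(1)] by metis
  have yd: "gdist V E x' y = d - i" using A[OF xy(2)] xy(3) by simp
  have "{z \<in> V. E y z \<and> gdist V E x z = i + 1} = {z \<in> V. E y z \<and> gdist V E x' z + 1 = d - i}"
  proof (intro Collect_cong conj_cong refl)
    fix z assume "z \<in> V"
    from A[OF this] assms(3) show "(gdist V E x z = i + 1) = (gdist V E x' z + 1 = d - i)" by linarith
  qed
  thus ?thesis using dr_b[OF assms(1,3) xy] dr_c[OF assms(1) _ x'(1) xy(2) yd] by simp
qed


theorem lemma2p4:
  fixes V :: "'a set" and E :: "'a \<Rightarrow> 'a \<Rightarrow> bool"
    and d :: nat and b c :: "nat \<Rightarrow> nat"
  assumes "distance_regular V E d b c"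
    and "bipartite V E"
    and "antipodal_double_cover V E d"
    and "d \<ge> 1"
    and "mat_kernel (intersection_matrix d b c) \<noteq> {0\<^sub>v (d + 1)}"
  shows "even d \<and>
    (\<exists>u \<in> carrier_vec (d + 1).
       mat_kernel (intersection_matrix d b c) = {a \<cdot>\<^sub>v u | a. True} \<and>
       u $ 0 = 1 \<and> u $ 1 = 0 \<and> u $ d = (-1) ^ (d div 2))"
proof (rule main_alg)
  show "\<And>i. i \<le> d \<Longrightarrow> b 0 = b i + c i" using dr_bip_a[OF assms(1,2)] .
  show "\<And>i. 1 \<le> i \<Longrightarrow> i \<le> d \<Longrightarrow> c i > 0" using dr_c_pos[OF assms(1)] .
  show "\<And>i. i < d \<Longrightarrow> b i > 0" using dr_b_pos[OF assms(1)] .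
  show "\<And>i. i \<le> d \<Longrightarrow> b i = c (d - i)" using dr_b_c[OF assms(1,3)] .
  show "d \<ge> 1" by (rule assms(4))
  show "mat_kernel (intersection_matrix d b c) \<noteq> {0\<^sub>v (d + 1)}" by (rule assms(5))
qed

end
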